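(* If $B,C\in \mathcal{B}_{A}(\mathcal{H})$, then \begin{align*} d\omega _{A_{0}}^{2}\left( \begin{bmatrix} 0 & B \\ C & 0 \end{bmatrix} \right) &\leq \frac{1}{4}\max \left\{ \omega _{A}\left( BB^{\sharp _{A}}+C^{\sharp _{A}}C+4\left( C^{\sharp _{A}}C\right) ^{2}\right) ,\omega _{A}\left( B^{\sharp _{A}}B+CC^{\sharp _{A}}+4\left( B^{\sharp _{A}}B\right) ^{2}\right) \right\} \\ &\quad +\frac{1}{2}\max \left\{ \omega _{A}\left( BC\right) ,\omega _{A}\left( CB\right) \right\}. \end{align*}
   Context: $\mathcal{H}$ is a complex Hilbert space and $A\in\mathcal{B}(\mathcal{H})$ is a positive operator; $\langle x,z\rangle_A=\langle Ax,z\rangle$ and $\|z\|_A=\|A^{1/2}z\|$. $\mathcal{B}_A(\mathcal{H})$ denotes the set of bounded operators $S$ on $\mathcal{H}$ admitting an $A$-adjoint; $S^{\sharp_A}=A^{\dagger}S^*A$ is the distinguished $A$-adjoint ($A^\dagger$ the Moore-Penrose inverse). $\omega_A(S)=\sup\{|\langle Sz,z\rangle_A|:\|z\|_A=1\}$ is the $A$-numerical radius. $A_0=\begin{bmatrix} A&0\\0&A\end{bmatrix}$ on $\mathcal{H}\oplus\mathcal{H}$ induces $\langle x,z\rangle_{A_0}=\langle x_1,z_1\rangle_A+\langle x_2,z_2\rangle_A$, and $d\omega_{A_0}(X)=\sup\{(|\langle Xz,z\rangle_{A_0}|^2+\|Xz\|_{A_0}^4)^{1/2}:\|z\|_{A_0}=1\}$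 is the $A_0$-Davis-Wielandt radius. *)

theory Defs
  imports Complex_Main
begin

text \<open>Complex inner product spaces (HOL has only real ones); Hilbert = complete.\<close>
class complex_inner = real_normed_vector +
  fixes scaleC :: "complex \<Rightarrow> 'a \<Rightarrow> 'a"
    and cinner :: "'a \<Rightarrow> 'a \<Rightarrow> complex"
  assumes scaleC_add_right: "scaleC a (x + y) = scaleC a x + scaleC a y"
    and scaleC_add_left: "scaleC (a + b) x = scaleC a x + scaleC b x"
    and scaleC_scaleC: "scaleC a (scaleC b x) = scaleC (a * b) x"
    and scaleC_one: "scaleC 1 x = x"
    and scaleR_scaleC: "scaleR r x = scaleC (of_real r) x"
    and cinner_add_left: "cinner (x + y) z = cinner x z + cinner y z"
    and cinner_scaleC_left: "cinner (scaleC a x) y = a * cinner x y"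
    and cinner_commute: "cinner y x = cnj (cinner x y)"
    and cinner_ge_zero: "0 \<le> Re (cinner x x)"
    and cinner_eq_zero_iff: "cinner x x = 0 \<longleftrightarrow> x = 0"
    and norm_eq_sqrt_cinner: "norm x = sqrt (Re (cinner x x))"

class chilbert_space = complex_inner + complete_space

definition clinear :: "('a::complex_inner \<Rightarrow> 'b::complex_inner) \<Rightarrow> bool" where
  "clinear T \<longleftrightarrow> (\<forall>x y. T (x + y) = T x + T y) \<and> (\<forall>c x. T (scaleC c x) = scaleC c (T x))"

definition bounded_clinear :: "('a::complex_inner \<Rightarrow> 'b::complex_inner) \<Rightarrow> bool" where
  "bounded_clinear T \<longleftrightarrow> clinear T \<and> (\<exists>K. \<forall>x. norm (T x) \<le> norm x * K)"

text \<open>Hilbert-space adjoint S* (exists and is unique for bounded S on a Hilbert space).\<close>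
definition adj :: "('a::complex_inner \<Rightarrow> 'a) \<Rightarrow> 'a \<Rightarrow> 'a" where
  "adj S = (SOME T. \<forall>x y. cinner (S x) y = cinner x (T y))"

definition positive_op :: "('a::complex_inner \<Rightarrow> 'a) \<Rightarrow> bool" where
  "positive_op A \<longleftrightarrow> bounded_clinear A \<and>
     (\<forall>x. Im (cinner (A x) x) = 0 \<and> 0 \<le> Re (cinner (A x) x))"

definition orth :: "'a::complex_inner set \<Rightarrow> 'a set" where
  "orth S = {x. \<forall>s\<in>S. cinner x s = 0}"

text \<open>Moore-Penrose inverse (Nashed): on R(A) + R(A)^perp, A^dagger y is the unique
  x in N(A)^perp with y = A x + z, z in R(A)^perp.\<close>
definition mp_inv :: "('a::complex_inner \<Rightarrow> 'a) \<Rightarrow> 'a \<Rightarrow> 'a" where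
  "mp_inv A y = (THE x. x \<in> orth {w. A w = 0} \<and> (\<exists>z\<in>orth (range A). y = A x + z))"

definition ainner :: "('a::complex_inner \<Rightarrow> 'a) \<Rightarrow> 'a \<Rightarrow> 'a \<Rightarrow> complex" where
  "ainner A x z = cinner (A x) z"

definition anorm :: "('a::complex_inner \<Rightarrow> 'a) \<Rightarrow> 'a \<Rightarrow> real" where
  "anorm A z = sqrt (Re (cinner (A z) z))"

definition BA :: "('a::complex_inner \<Rightarrow> 'a) \<Rightarrow> ('a \<Rightarrow> 'a) set" where
  "BA A = {S. bounded_clinear S \<and>
      (\<exists>T. bounded_clinear T \<and> (\<forall>x y. ainner A (S x) y = ainner A x (T y)))}"

definition sharpA :: "('a::complex_inner \<Rightarrow> 'a) \<Rightarrow> ('a \<Rightarrow> 'a) \<Rightarrow> 'a \<Rightarrow> 'a" where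
  "sharpA A S = mp_inv A \<circ> adj S \<circ> A"

text \<open>A-numerical radius (supremum of nonnegative values; convention sup of empty set = 0).\<close>
definition omegaA :: "('a::complex_inner \<Rightarrow> 'a) \<Rightarrow> ('a \<Rightarrow> 'a) \<Rightarrow> real" where
  "omegaA A S = Sup (insert 0 {cmod (ainner A (S z) z) | z. anorm A z = 1})"

text \<open>Semi-inner product and seminorm on H \<oplus> H induced by A_0 = diag(A,A).\<close>
definition ainner0 :: "('a::complex_inner \<Rightarrow> 'a) \<Rightarrow> 'a \<times> 'a \<Rightarrow> 'a \<times> 'a \<Rightarrow> complex" where
  "ainner0 A x z = ainner A (fst x) (fst z) + ainner A (snd x) (snd z)"

definition anorm0 :: "('a::complex_inner \<Rightarrow> 'a) \<Rightarrow> 'a \<times> 'a \<Rightarrow> real" where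
  "anorm0 A z = sqrt (Re (ainner0 A z z))"

definition dwA0 :: "('a::complex_inner \<Rightarrow> 'a) \<Rightarrow> ('a \<times> 'a \<Rightarrow> 'a \<times> 'a) \<Rightarrow> real" where
  "dwA0 A X = Sup (insert 0 {sqrt ((cmod (ainner0 A (X z) z))\<^sup>2 + (anorm0 A (X z)) ^ 4) | z. anorm0 A z = 1})"

text \<open>Operator matrix [[0,B],[C,0]] on H \<oplus> H.\<close>
definition offdiag :: "('a \<Rightarrow> 'a) \<Rightarrow> ('a \<Rightarrow> 'a) \<Rightarrow> 'a \<times> 'a \<Rightarrow> 'a \<times> 'a" where
  "offdiag B C z = (B (snd z), C (fst z))"

end

theory Submission
  imports Defs "HOL-Library.Product_Plus"
begin


locale sesq =
  fixes g :: "'v::ab_group_add \<Rightarrow> 'v \<Rightarrow> complex" and sc :: "complex \<Rightarrow> 'v \<Rightarrow> 'v"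
  assumes add_left: "g (x + y) z = g x z + g y z"
    and sc_left: "g (sc c x) y = c * g x y"
    and sym: "g y x = cnj (g x y)"
    and pos: "0 \<le> Re (g x x)"
begin

definition N :: "'v \<Rightarrow> real" where "N x = sqrt (Re (g x x))"

lemma zero_left[simp]: "g 0 y = 0"
  using add_left[of 0 0 y] by simp
lemma minus_left: "g (- x) y = - g x y"
proof -
  have "g x y + g (-x) y = 0" using add_left[of x "-x" y] by simp
  then show ?thesis by (simp add: add_eq_0_iff)
qed
lemma diff_left: "g (x - y) z = g x z - g y z"
  using add_left[of x "-y" z] minus_left[of y z] by simp
lemma add_right: "g z (x + y) = g z x + g z y"
  using sym[of z "x+y"] add_left[of x y z] sym[of z x] sym[of z y] by simp
lemma diff_right: "g z (x - y) = g z x - g z y"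
  using sym[of z "x-y"] diff_left[of x y z] sym[of z x] sym[of z y] by simp
lemma sc_right: "g x (sc c y) = cnj c * g x y"
  using sym[of x "sc c y"] sc_left[of c y x] sym[of x y] by simp
lemma zero_right[simp]: "g x 0 = 0"
  using sym[of x 0] by simp
lemma Im_self: "Im (g x x) = 0"
proof -
  have "Im (g x x) = Im (cnj (g x x))" by (rule arg_cong[where f=Im, OF sym[of x x]])
  then show ?thesis by simp
qed
lemma self_real: "g x x = complex_of_real (Re (g x x))"
  using Im_self[of x] by (simp add: complex_eq_iff)
lemma N_sq: "(N x)^2 = Re (g x x)"
  unfolding N_def using pos[of x] by simp
lemma N_nonneg: "0 \<le> N x" unfolding N_def using pos[of x] by simp

lemma cnj_mult_self: "cnj p * p = complex_of_real ((cmod p)^2)"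
  by (subst mult.commute) (rule complex_norm_square[symmetric])
lemma mult_cnj_self: "p * cnj p = complex_of_real ((cmod p)^2)"
  by (rule complex_norm_square[symmetric])

lemma expand: "Re (g (x - sc t y) (x - sc t y)) =
   Re (g x x) - 2 * Re (cnj t * g x y) + (cmod t)^2 * Re (g y y)"
proof -
  have "g (x - sc t y) (x - sc t y) = g x x - cnj t * g x y - t * g y x + t * cnj t * g y y"
    by (simp add: diff_left diff_right sc_left sc_right algebra_simps)
  moreover have "g y x = cnj (g x y)" by (rule sym)
  moreover have "t * cnj t = complex_of_real ((cmod t)^2)" by (rule mult_cnj_self)
  ultimately have "g (x - sc t y) (x - sc t y) = g x x - cnj t * g x y - cnj (cnj t * g x y) + complex_of_real ((cmod t)^2) * g y y"
    by simp
  then show ?thesis by simp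
qed

lemma real_quad_aux:
  fixes a b c :: real
  assumes "0 \<le> a" "0 \<le> b" "0 \<le> c" and H: "\<And>s. 0 \<le> a - 2 * s * c + s^2 * c * b"
  shows "c \<le> a * b"
proof (cases "b = 0")
  case True
  show ?thesis
  proof (rule ccontr)
    assume "\<not> c \<le> a * b"
    then have "c > 0" using True by simp
    have "0 \<le> a - 2 * ((a+1)/(2*c)) * c" using H[of "(a+1)/(2*c)"] True by simp
    also have "\<dots> = -1" using \<open>c>0\<close> by (simp add: field_simps)
    finally show False by simp
  qed
next
  case False
  then have bp: "b > 0" using assms by simp
  have "0 \<le> a - 2 * (1/b) * c + (1/b)^2 * c * b" by (rule H)
  also have "\<dots> = a - c / b" using bp by (simp add: field_simps power2_eq_square)
  finally show ?thesis using bp by (simp add: field_simps)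
qed

lemma CS_sq: "(cmod (g x y))^2 \<le> Re (g x x) * Re (g y y)"
proof -
  have "0 \<le> Re (g x x) - 2 * s * (cmod (g x y))^2 + s^2 * (cmod (g x y))^2 * Re (g y y)" for s :: real
  proof -
    have "0 \<le> Re (g (x - sc (of_real s * g x y) y) (x - sc (of_real s * g x y) y))" by (rule pos)
    also have "\<dots> = Re (g x x) - 2 * Re (cnj (of_real s * g x y) * g x y) + (cmod (of_real s * g x y))^2 * Re (g y y)"
      by (rule expand)
    also have "cnj (of_real s * g x y) * g x y = of_real (s * (cmod (g x y))^2)"
      by (simp add: mult.assoc cnj_mult_self)
    also have "(cmod (of_real s * g x y))^2 = s^2 * (cmod (g x y))^2"
      by (simp add: norm_mult power_mult_distrib)
    finally show ?thesis by simp
  qed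
  then show ?thesis using real_quad_aux pos by simp
qed

lemma CS: "cmod (g x y) \<le> N x * N y"
proof -
  have "(cmod (g x y))^2 \<le> (N x * N y)^2"
    using CS_sq by (simp add: power_mult_distrib N_sq)
  then show ?thesis using N_nonneg by (meson mult_nonneg_nonneg power2_le_imp_le)
qed

lemma buzano:
  assumes e: "g e e = 1"
  shows "2 * cmod (g a e * g e b) \<le> N a * N b + cmod (g a b)"
proof -
  define w where "w = sc (2 * g b e) e - b"
  have geb: "g e b = cnj (g b e)" by (rule sym)
  have "g w w = 4 * (g b e * cnj (g b e)) * g e e - 2 * g b e * g e b - 2 * cnj (g b e) * g b e + g b b"
    unfolding w_def by (simp add: diff_left diff_right sc_left sc_right algebra_simps)
  then have "g w w = g b b" using e geb by (simp add: algebra_simps)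
  then have Nw: "N w = N b" by (simp add: N_def)
  have "g a w = 2 * cnj (g b e) * g a e - g a b"
    unfolding w_def by (simp add: diff_right sc_right)
  then have gaw: "g a w = 2 * (g a e * g e b) - g a b" using geb by simp
  have "cmod (2 * (g a e * g e b)) \<le> cmod (g a w) + cmod (g a b)"
    using gaw norm_triangle_ineq[of "g a w" "g a b"] by simp
  also have "\<dots> \<le> N a * N b + cmod (g a b)" using CS[of a w] Nw by simp
  finally show ?thesis by (simp add: norm_mult)
qed

lemma orth_of_min:
  assumes H: "\<And>t. Re (g u u) \<le> Re (g (u - sc t y) (u - sc t y))"
  shows "g u y = 0"
proof -
  let ?p = "(cmod (g u y))^2" and ?b = "Re (g y y)"
  define s where "s = 1 / (?b + 1)"
  have bnn: "0 \<le> ?b" by (rule pos)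
  have sp: "s > 0" unfolding s_def using bnn by simp
  have "Re (g u u) \<le> Re (g u u) - 2 * Re (cnj (of_real s * g u y) * g u y) + (cmod (of_real s * g u y))^2 * ?b"
    using H[of "of_real s * g u y"] expand by simp
  also have "cnj (of_real s * g u y) * g u y = of_real (s * ?p)"
    by (simp add: mult.assoc cnj_mult_self)
  also have "(cmod (of_real s * g u y))^2 = s^2 * ?p"
    by (simp add: norm_mult power_mult_distrib)
  finally have "0 \<le> ?p * s * (s * ?b - 2)" by (simp add: algebra_simps power2_eq_square)
  moreover have "s * ?b < 1" unfolding s_def using bnn by (simp add: field_simps)
  ultimately have "?p * s \<le> 0"
    by (auto simp add: zero_le_mult_iff)
  then have "?p \<le> 0" using sp by (simp add: mult_le_0_iff)
  then show ?thesis by simp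
qed

end



lemma sesq_cinner: "sesq (cinner :: 'a::complex_inner \<Rightarrow> 'a \<Rightarrow> complex) scaleC"
  by unfold_locales (auto simp: cinner_add_left cinner_scaleC_left cinner_ge_zero intro: cinner_commute)

lemma N_cinner: "sesq.N (cinner :: 'a::complex_inner \<Rightarrow> 'a \<Rightarrow> complex) x = norm x"
  by (simp add: sesq.N_def[OF sesq_cinner] norm_eq_sqrt_cinner)

lemma cinner_CS: "cmod (cinner x y) \<le> norm x * norm (y::'a::complex_inner)"
  using sesq.CS[OF sesq_cinner, of x y] by (simp add: N_cinner)

lemma cinner_add_right: "cinner (z::'a::complex_inner) (x + y) = cinner z x + cinner z y"
  by (rule sesq.add_right[OF sesq_cinner])
lemma cinner_diff_right: "cinner (z::'a::complex_inner) (x - y) = cinner z x - cinner z y"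
  by (rule sesq.diff_right[OF sesq_cinner])
lemma cinner_diff_left: "cinner (x - y) (z::'a::complex_inner) = cinner x z - cinner y z"
  by (rule sesq.diff_left[OF sesq_cinner])
lemma cinner_scaleC_right: "cinner (x::'a::complex_inner) (scaleC c y) = cnj c * cinner x y"
  by (rule sesq.sc_right[OF sesq_cinner])
lemma cinner_zero_left[simp]: "cinner 0 (y::'a::complex_inner) = 0"
  by (rule sesq.zero_left[OF sesq_cinner])
lemma cinner_zero_right[simp]: "cinner (y::'a::complex_inner) 0 = 0"
  by (rule sesq.zero_right[OF sesq_cinner])
lemma cinner_scaleR_left: "cinner (scaleR r x) (y::'a::complex_inner) = of_real r * cinner x y"
  by (simp add: scaleR_scaleC cinner_scaleC_left)
lemma cinner_scaleR_right: "cinner x (scaleR r (y::'a::complex_inner)) = of_real r * cinner x y"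
  by (simp add: scaleR_scaleC cinner_scaleC_right)

lemma cinner_zero_all: "(\<And>y. cinner x y = 0) \<Longrightarrow> (x::'a::complex_inner) = 0"
  using cinner_eq_zero_iff by blast

lemma cinner_ext: "(\<And>y. cinner x y = cinner x' y) \<Longrightarrow> (x::'a::complex_inner) = x'"
  using cinner_zero_all[of "x - x'"] by (simp add: cinner_diff_left)

lemma scaleC_zero[simp]: "scaleC c (0::'a::complex_inner) = 0"
  using cinner_zero_all[of "scaleC c (0::'a)"] by (simp add: cinner_scaleC_left)

lemma scaleC_diff: "scaleC c (x - y) = scaleC c x - scaleC c (y::'a::complex_inner)"
  using scaleC_add_right[of c "x - y" y] by (simp add: algebra_simps)

lemma clinear_add: "clinear T \<Longrightarrow> T (x + y) = T x + T y"
  unfolding clinear_def by blast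
lemma clinear_scaleC: "clinear T \<Longrightarrow> T (scaleC c x) = scaleC c (T x)"
  unfolding clinear_def by blast

lemma bcl_bl: "bounded_clinear T \<Longrightarrow> bounded_linear T"
  unfolding bounded_clinear_def
  by (auto intro!: bounded_linear_intro simp: clinear_add clinear_scaleC scaleR_scaleC)

lemma posA_sym:
  fixes A :: "'a::complex_inner \<Rightarrow> 'a"
  assumes "positive_op A"
  shows "cinner (A x) y = cinner x (A y)"
proof -
  have cl: "clinear A" using assms unfolding positive_op_def bounded_clinear_def by blast
  have e: "cinner (A u) u = cinner u (A u)" for u
  proof -
    have "Im (cinner (A u) u) = 0" using assms unfolding positive_op_def by blast
    then have "cnj (cinner (A u) u) = cinner (A u) u" by (simp add: complex_eq_iff)
    then show ?thesis using cinner_commute[of u "A u"] by simp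
  qed
  have e1: "cinner (A (x + y)) (x + y) = cinner (x + y) (A (x + y))" by (rule e)
  have e2: "cinner (A (x + scaleC \<i> y)) (x + scaleC \<i> y) = cinner (x + scaleC \<i> y) (A (x + scaleC \<i> y))" by (rule e)
  note simps = clinear_add[OF cl] clinear_scaleC[OF cl] cinner_add_left cinner_add_right
     cinner_scaleC_left cinner_scaleC_right e
  from e1 have 1: "cinner (A x) y + cinner (A y) x = cinner x (A y) + cinner y (A x)"
    by (simp add: simps algebra_simps)
  from e2 have "- (\<i> * cinner (A x) y) + \<i> * cinner (A y) x = - (\<i> * cinner x (A y)) + \<i> * cinner y (A x)"
    by (simp add: simps) (simp add: algebra_simps)
  then have "\<i> * (cinner (A x) y - cinner (A y) x) = \<i> * (cinner x (A y) - cinner y (A x))"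
    by (simp add: algebra_simps)
  then have 2: "cinner (A x) y - cinner (A y) x = cinner x (A y) - cinner y (A x)"
    by simp
  from arg_cong2[where f="(+)", OF 1 2] show ?thesis by simp
qed



lemma norm_sq_cinner: "(norm x)^2 = Re (cinner x (x::'a::complex_inner))"
  using cinner_ge_zero[of x] by (simp add: norm_eq_sqrt_cinner)

lemma parallelogram:
  fixes a b :: "'a::complex_inner"
  shows "(norm (a + b))^2 + (norm (a - b))^2 = 2 * (norm a)^2 + 2 * (norm b)^2"
  by (simp add: norm_sq_cinner cinner_add_left cinner_add_right cinner_diff_left cinner_diff_right)

lemma projection:
  fixes M :: "'a::chilbert_space set"
  assumes cl: "closed M" and z: "0 \<in> M" and ad: "\<And>x y. x \<in> M \<Longrightarrow> y \<in> M \<Longrightarrow> x + y \<in> M"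
    and sm: "\<And>c x. x \<in> M \<Longrightarrow> scaleC c x \<in> M"
  shows "\<exists>m\<in>M. \<forall>y\<in>M. cinner (x - m) y = 0"
proof -
  define D where "D = {(norm (x - m))^2 | m. m \<in> M}"
  define d where "d = Inf D"
  have Dne: "D \<noteq> {}" using z unfolding D_def by blast
  have Dbdd: "bdd_below D" unfolding D_def by (rule bdd_belowI[of _ 0]) auto
  have low: "d \<le> (norm (x - m))^2" if "m \<in> M" for m
    unfolding d_def by (rule cInf_lower[OF _ Dbdd]) (use that D_def in blast)
  have "\<exists>m. m \<in> M \<and> (norm (x - m))^2 < d + inverse (real (Suc n))" for n
  proof -
    have "Inf D < d + inverse (real (Suc n))" unfolding d_def by simp
    from cInf_lessD[OF Dne this] show ?thesis unfolding D_def by blast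
  qed
  then obtain f where f: "\<And>n. f n \<in> M" and fd: "\<And>n. (norm (x - f n))^2 < d + inverse (real (Suc n))"
    by metis
  have half: "scaleR (1/2) (u + v) \<in> M" if "u \<in> M" "v \<in> M" for u v
    using sm[OF ad[OF that], of "of_real (1/2)"] by (simp add: scaleR_scaleC)
  have dist_bound: "(norm (f k - f n))^2 \<le> 2 * inverse (real (Suc n)) + 2 * inverse (real (Suc k))" for n k
  proof -
    have e3: "(x - f n) - (x - f k) = f k - f n" by simp
    have P: "(norm ((x - f n) + (x - f k)))^2 + (norm (f k - f n))^2
        = 2 * (norm (x - f n))^2 + 2 * (norm (x - f k))^2"
      using parallelogram[of "x - f n" "x - f k"] unfolding e3 .
    have "(x - f n) + (x - f k) = scaleR 2 (x - scaleR (1/2) (f n + f k))"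
      by (simp add: algebra_simps scaleR_2)
    then have "(norm ((x - f n) + (x - f k)))^2 = 4 * (norm (x - scaleR (1/2) (f n + f k)))^2"
      by (simp add: power_mult_distrib)
    moreover have "d \<le> (norm (x - scaleR (1/2) (f n + f k)))^2" by (rule low[OF half[OF f f]])
    ultimately show ?thesis using P fd[of n] fd[of k] by linarith
  qed
  have "Cauchy f"
  proof (rule CauchyI)
    fix e :: real assume "0 < e"
    then have "0 < e^2 / 4" by simp
    then obtain N where N: "inverse (real (Suc N)) < e^2 / 4"
      using reals_Archimedean by blast
    show "\<exists>N. \<forall>m\<ge>N. \<forall>n\<ge>N. norm (f m - f n) < e"
    proof (intro exI allI impI)
      fix m n assume mn: "N \<le> m" "N \<le> n"
      have im: "inverse (real (Suc m)) \<le> inverse (real (Suc N))"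
        using mn by (simp add: le_imp_inverse_le)
      have iN: "inverse (real (Suc n)) \<le> inverse (real (Suc N))"
        using mn by (simp add: le_imp_inverse_le)
      have "(norm (f m - f n))^2 < e^2" using dist_bound[of m n] im iN N
        norm_minus_commute[of "f n" "f m"] by linarith
      then show "norm (f m - f n) < e" using \<open>0 < e\<close> by (simp add: power_less_imp_less_base)
    qed
  qed
  then obtain m where lim: "f \<longlonglongrightarrow> m" using Cauchy_convergent convergent_def by blast
  have mM: "m \<in> M" by (rule closed_sequentially[OF cl f lim])
  have l1: "(\<lambda>n. (norm (x - f n))^2) \<longlonglongrightarrow> (norm (x - m))^2"
    by (intro tendsto_intros lim)
  have l2: "(\<lambda>n. d + inverse (real (Suc n))) \<longlonglongrightarrow> d + 0"
    by (intro tendsto_intros LIMSEQ_inverse_real_of_nat)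
  have mind: "(norm (x - m))^2 \<le> d"
    using LIMSEQ_le[OF l1 l2] fd less_imp_le by auto
  have "cinner (x - m) y = 0" if yM: "y \<in> M" for y
  proof (rule sesq.orth_of_min[OF sesq_cinner])
    fix t
    have "m + scaleC t y \<in> M" using ad[OF mM sm[OF yM]] .
    from low[OF this] have "d \<le> (norm ((x - m) - scaleC t y))^2" by (simp add: algebra_simps)
    then show "Re (cinner (x - m) (x - m)) \<le> Re (cinner (x - m - scaleC t y) (x - m - scaleC t y))"
      using mind by (simp add: norm_sq_cinner)
  qed
  then show ?thesis using mM by blast
qed

lemma riesz:
  fixes f :: "'a::chilbert_space \<Rightarrow> complex"
  assumes add: "\<And>x y. f (x + y) = f x + f y" and sc: "\<And>c x. f (scaleC c x) = c * f x"
    and bnd: "\<And>x. cmod (f x) \<le> norm x * K"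
  shows "\<exists>v. \<forall>x. f x = cinner x v"
proof (cases "\<forall>x. f x = 0")
  case True then show ?thesis by (intro exI[of _ 0]) simp
next
  case False
  then obtain x0 where x0: "f x0 \<noteq> 0" by blast
  have bl: "bounded_linear f"
    by (rule bounded_linear_intro[where K=K]) (auto simp: add sc scaleR_scaleC bnd scaleR_conv_of_real)
  have f0: "f 0 = 0" using add[of 0 0] by simp
  define M where "M = {w. f w = 0}"
  have clM: "closed M" unfolding M_def
    by (rule closed_Collect_eq) (use bounded_linear.continuous_on[OF bl continuous_on_id] in \<open>auto intro: continuous_on_const\<close>)
  obtain m where mM: "m \<in> M" and orth: "\<And>y. y \<in> M \<Longrightarrow> cinner (x0 - m) y = 0"
    using projection[OF clM, of x0] f0 unfolding M_def by (auto simp: add sc)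
  define u where "u = x0 - m"
  have fm: "f m = 0" using mM M_def by simp
  have fu: "f u = f x0" unfolding u_def using add[of "x0 - m" m] fm by simp
  have u0: "u \<noteq> 0" using fu x0 f0 by auto
  then have uu: "cinner u u \<noteq> 0" using cinner_eq_zero_iff by blast
  have main: "f x = cinner x (scaleC (cnj (f u / cinner u u)) u)" for x
  proof -
    define w where "w = scaleC (f x) u - scaleC (f u) x"
    have "f w = 0" unfolding w_def using add[of "scaleC (f x) u - scaleC (f u) x" "scaleC (f u) x"]
      by (simp add: sc)
    then have "cinner w u = 0" using orth[of w] unfolding M_def u_def
      by (simp add: cinner_commute[of "x0 - m" w])
    then have "f x * cinner u u = f u * cinner x u"
      unfolding w_def by (simp add: cinner_diff_left cinner_scaleC_left)
    then have "f x = f u / cinner u u * cinner x u" using uu by (simp add: field_simps)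
    then show ?thesis by (simp add: cinner_scaleC_right)
  qed
  then show ?thesis by blast
qed

lemma adj_exists:
  fixes S :: "'a::chilbert_space \<Rightarrow> 'a"
  assumes "bounded_clinear S"
  shows "cinner (S x) y = cinner x (adj S y)"
proof -
  have cl: "clinear S" and "\<exists>K. \<forall>x. norm (S x) \<le> norm x * K"
    using assms unfolding bounded_clinear_def by auto
  then obtain K where K: "\<And>x. norm (S x) \<le> norm x * K" by blast
  have "\<exists>v. \<forall>x. cinner (S x) y = cinner x v" for y
  proof (rule riesz[where K="K * norm y"])
    fix x show "cmod (cinner (S x) y) \<le> norm x * (K * norm y)"
      using cinner_CS[of "S x" y] K[of x] by (metis mult.assoc mult_right_mono norm_ge_zero order_trans)
  qed (auto simp: clinear_add[OF cl] clinear_scaleC[OF cl] cinner_add_left cinner_scaleC_left)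
  then have "\<exists>T. \<forall>x y. cinner (S x) y = cinner x (T y)" by metis
  from someI_ex[OF this] show ?thesis unfolding adj_def by blast
qed



lemma bl_scaleR: "bounded_linear f \<Longrightarrow> f (scaleR r x) = scaleR r (f x)"
  by (metis bounded_linear.linear linear_scale)
lemma bl_add: "bounded_linear f \<Longrightarrow> f (x + y) = f x + f y"
  by (metis bounded_linear.linear linear_add)
lemma bl_diff: "bounded_linear f \<Longrightarrow> f (x - y) = f x - f y"
  by (metis bounded_linear.linear linear_diff)
lemma bl_zero: "bounded_linear f \<Longrightarrow> f 0 = 0"
  by (metis bounded_linear.linear linear_0)

definition aadj :: "('a::complex_inner \<Rightarrow> 'a) \<Rightarrow> ('a \<Rightarrow> 'a) \<Rightarrow> ('a \<Rightarrow> 'a) \<Rightarrow> bool" where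
  "aadj A S T \<longleftrightarrow> (\<forall>x y. ainner A (S x) y = ainner A x (T y))"

locale posA =
  fixes A :: "'a::chilbert_space \<Rightarrow> 'a"
  assumes pA: "positive_op A"
begin

lemma Abcl: "bounded_clinear A" using pA unfolding positive_op_def by blast
lemma Acl: "clinear A" using Abcl unfolding bounded_clinear_def by blast
lemma Abl: "bounded_linear A" by (rule bcl_bl[OF Abcl])

lemma sesqA: "sesq (ainner A) scaleC"
proof unfold_locales
  fix x y z :: 'a and c
  show "ainner A (x + y) z = ainner A x z + ainner A y z"
    by (simp add: ainner_def clinear_add[OF Acl] cinner_add_left)
  show "ainner A (scaleC c x) y = c * ainner A x y"
    by (simp add: ainner_def clinear_scaleC[OF Acl] cinner_scaleC_left)
  show "ainner A y x = cnj (ainner A x y)"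
    by (simp add: ainner_def posA_sym[OF pA, of y x] cinner_commute[of "A x" y])
  show "0 \<le> Re (ainner A x x)" using pA unfolding positive_op_def ainner_def by blast
qed

lemma anorm_N: "anorm A = sesq.N (ainner A)"
  by (rule ext) (simp add: sesq.N_def[OF sesqA] anorm_def ainner_def)

lemma ACS: "cmod (ainner A x y) \<le> anorm A x * anorm A y"
  using sesq.CS[OF sesqA] by (simp add: anorm_N)

lemma anorm_nonneg: "0 \<le> anorm A x" by (simp add: anorm_N sesq.N_nonneg[OF sesqA])

lemma anorm_sq: "(anorm A x)^2 = Re (ainner A x x)"
  by (simp add: anorm_N sesq.N_sq[OF sesqA])

lemma ainner_self: "ainner A x x = complex_of_real ((anorm A x)^2)"
  using sesq.self_real[OF sesqA, of x] by (simp add: anorm_sq)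

lemma ainner_sym: "ainner A y x = cnj (ainner A x y)"
  by (rule sesq.sym[OF sesqA])

lemma A_ext: "(\<And>y. ainner A x y = ainner A x' y) \<Longrightarrow> A x = A x'"
  unfolding ainner_def by (rule cinner_ext)

lemma ainner_scaleR_left: "ainner A (scaleR r x) y = of_real r * ainner A x y"
  by (simp add: ainner_def bl_scaleR[OF Abl] cinner_scaleR_left)
lemma ainner_scaleR_right: "ainner A x (scaleR r y) = of_real r * ainner A x y"
  by (simp add: ainner_def cinner_scaleR_right)

lemma anorm_scaleR: "anorm A (scaleR r x) = \<bar>r\<bar> * anorm A x"
proof -
  have "(anorm A (scaleR r x))^2 = r^2 * (anorm A x)^2"
    by (simp add: anorm_sq ainner_scaleR_left ainner_scaleR_right power2_eq_square[of r])
  also have "\<dots> = (\<bar>r\<bar> * anorm A x)^2" by (simp add: power_mult_distrib)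
  finally show ?thesis
    by (metis power2_eq_iff_nonneg anorm_nonneg abs_ge_zero mult_nonneg_nonneg)
qed

lemma anorm_le_norm: "\<exists>KA\<ge>0. \<forall>w. (anorm A w)^2 \<le> KA * (norm w)^2"
proof -
  obtain K where K: "\<And>x. norm (A x) \<le> norm x * K" "K > 0" using bounded_linear.pos_bounded[OF Abl] by blast
  have "(anorm A w)^2 \<le> K * (norm w)^2" for w
  proof -
    have "(anorm A w)^2 = Re (cinner (A w) w)" by (simp add: anorm_sq ainner_def)
    also have "\<dots> \<le> cmod (cinner (A w) w)" by (rule complex_Re_le_cmod)
    also have "\<dots> \<le> norm (A w) * norm w" by (rule cinner_CS)
    also have "\<dots> \<le> norm w * K * norm w" by (rule mult_right_mono[OF K(1) norm_ge_zero])
    finally show ?thesis by (simp add: power2_eq_square mult_ac)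
  qed
  then show ?thesis using K(2) less_imp_le by blast
qed

lemma aadj_swap: "aadj A S T \<Longrightarrow> aadj A T S"
  unfolding aadj_def by (metis ainner_sym)

lemma aadj_resp: "aadj A S T \<Longrightarrow> A w = A w' \<Longrightarrow> A (S w) = A (S w')"
  by (rule A_ext) (simp add: aadj_def ainner_def)

lemma abound:
  assumes bS: "bounded_linear S" and bT: "bounded_linear T" and ad: "aadj A S T"
  shows "\<exists>K. \<forall>z. anorm A (S z) \<le> K * anorm A z"
proof -
  define R where "R = (\<lambda>x. T (S x))"
  have bR: "bounded_linear R" unfolding R_def by (rule bounded_linear_compose[OF bT bS])
  obtain KR where KR: "KR > 0" "\<And>x. norm (R x) \<le> norm x * KR"
    using bounded_linear.pos_bounded[OF bR] by blast
  have ad2: "aadj A T S" by (rule aadj_swap[OF ad])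
  have selfR: "ainner A (R x) y = ainner A x (R y)" for x y
    using ad ad2 unfolding aadj_def R_def by metis
  have selfRm: "ainner A ((R^^m) x) y = ainner A x ((R^^m) y)" for m x y
  proof (induction m arbitrary: y)
    case 0 then show ?case by simp
  next
    case (Suc m)
    have "ainner A ((R^^Suc m) x) y = ainner A ((R^^m) x) (R y)" by (simp add: selfR)
    also have "\<dots> = ainner A x ((R^^m) (R y))" by (rule Suc.IH)
    also have "\<dots> = ainner A x ((R^^Suc m) y)" by (simp add: funpow_swap1)
    finally show ?case .
  qed
  obtain KA where KA: "\<And>w. (anorm A w)^2 \<le> KA * (norm w)^2" and KA0: "0 \<le> KA"
    using anorm_le_norm by blast
  have Rm: "norm ((R^^m) z) \<le> KR^m * norm z" for m z
  proof (induction m)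
    case 0 then show ?case by simp
  next
    case (Suc m)
    have "norm ((R^^Suc m) z) = norm (R ((R^^m) z))" by simp
    also have "\<dots> \<le> norm ((R^^m) z) * KR" by (rule KR(2))
    also have "\<dots> \<le> KR^m * norm z * KR" using Suc.IH KR(1) by (simp add: mult_right_mono)
    finally show ?case by (simp add: mult_ac)
  qed
  have unit: "anorm A (R z) \<le> KR" if z1: "anorm A z = 1" for z
  proof -
    define b where "b m = anorm A ((R^^m) z)" for m
    have b0: "0 \<le> b m" for m unfolding b_def by (rule anorm_nonneg)
    have bsq: "(b m)^2 \<le> b (2*m)" for m
    proof -
      have "(b m)^2 = Re (ainner A ((R^^m) z) ((R^^m) z))" by (simp add: b_def anorm_sq)
      also have "\<dots> = Re (ainner A z ((R^^m) ((R^^m) z)))" by (simp add: selfRm)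
      also have "\<dots> \<le> cmod (ainner A z ((R^^m) ((R^^m) z)))" by (rule complex_Re_le_cmod)
      also have "\<dots> \<le> anorm A z * anorm A ((R^^m) ((R^^m) z))" by (rule ACS)
      also have "(R^^m) ((R^^m) z) = (R^^(2*m)) z" by (simp add: mult_2 funpow_add)
      finally show ?thesis by (simp add: z1 b_def)
    qed
    have pw: "(b 1)^(2^n) \<le> b (2^n)" for n
    proof (induction n)
      case 0 then show ?case by simp
    next
      case (Suc n)
      have "(b 1)^(2^Suc n) = ((b 1)^(2^n))^2" by (simp add: power_mult[symmetric] mult.commute)
      also have "\<dots> \<le> (b (2^n))^2" by (rule power_mono[OF Suc.IH]) (simp add: b0)
      also have "\<dots> \<le> b (2 * 2^n)" by (rule bsq)
      finally show ?case by simp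
    qed
    define c where "c = sqrt KA * norm z"
    have up: "b m \<le> c * KR^m" for m
    proof -
      have "(b m)^2 \<le> KA * (norm ((R^^m) z))^2" unfolding b_def by (rule KA)
      also have "\<dots> \<le> KA * (KR^m * norm z)^2"
        by (rule mult_left_mono[OF power_mono[OF Rm] KA0]) simp
      also have "\<dots> = (c * KR^m)^2" using KA0 by (simp add: c_def power_mult_distrib)
      finally show ?thesis using b0[of m] KR(1) KA0 unfolding c_def
        by (meson mult_nonneg_nonneg norm_ge_zero real_sqrt_ge_zero zero_le_power power2_le_imp_le less_imp_le)
    qed
    show ?thesis
    proof (rule ccontr)
      assume "\<not> anorm A (R z) \<le> KR"
      then have gt: "b 1 > KR" by (simp add: b_def)
      define q where "q = b 1 / KR"
      have q1: "q > 1" using gt KR(1) by (simp add: q_def field_simps)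
      have qb: "q^(2^n) \<le> c" for n
      proof -
        have "(b 1)^(2^n) \<le> c * KR^(2^n)" using pw[of n] up[of "2^n"] by linarith
        moreover have "(b 1)^(2^n) = q^(2^n) * KR^(2^n)" using KR(1)
          by (simp add: q_def power_divide)
        ultimately show ?thesis using KR(1) by simp
      qed
      obtain n :: nat where n: "c < of_nat n * (q - 1)" using reals_Archimedean3[of "q - 1"] q1 by auto
      have "1 + of_nat (2^n) * (q - 1) \<le> (1 + (q - 1))^(2^n)"
        by (rule Bernoulli_inequality) (use q1 in simp)
      then have "1 + of_nat (2^n) * (q - 1) \<le> q^(2^n)" by simp
      moreover have "of_nat n * (q - 1) \<le> of_nat (2^n) * (q - 1)"
        using q1 by (intro mult_right_mono) (simp_all add: less_imp_le[OF less_exp])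
      ultimately show False using qb[of n] n by linarith
    qed
  qed
  have Rb: "anorm A (R z) \<le> KR * anorm A z" for z
  proof (cases "anorm A z = 0")
    case True
    have "(anorm A (R z))^2 = Re (ainner A z (R (R z)))" by (simp add: anorm_sq selfR)
    also have "\<dots> \<le> cmod (ainner A z (R (R z)))" by (rule complex_Re_le_cmod)
    also have "\<dots> \<le> anorm A z * anorm A (R (R z))" by (rule ACS)
    finally show ?thesis using True by simp
  next
    case False
    then have ap: "anorm A z > 0" using anorm_nonneg[of z] by simp
    define z' where "z' = scaleR (1 / anorm A z) z"
    have "anorm A z' = 1" using ap by (simp add: z'_def anorm_scaleR)
    from unit[OF this] have "anorm A (R z') \<le> KR" .
    moreover have "anorm A (R z') = anorm A (R z) / anorm A z"
      using ap by (simp add: z'_def bl_scaleR[OF bR] anorm_scaleR)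
    ultimately show ?thesis using ap by (simp add: field_simps)
  qed
  have "anorm A (S z) \<le> sqrt KR * anorm A z" for z
  proof -
    have "(anorm A (S z))^2 = Re (ainner A z (R z))"
      using ad by (simp add: anorm_sq aadj_def R_def)
    also have "\<dots> \<le> cmod (ainner A z (R z))" by (rule complex_Re_le_cmod)
    also have "\<dots> \<le> anorm A z * anorm A (R z)" by (rule ACS)
    also have "\<dots> \<le> anorm A z * (KR * anorm A z)" by (rule mult_left_mono[OF Rb anorm_nonneg])
    also have "\<dots> = (sqrt KR * anorm A z)^2" using KR(1) by (simp add: power_mult_distrib power2_eq_square)
    finally show ?thesis using KR(1)
      by (meson anorm_nonneg mult_nonneg_nonneg real_sqrt_ge_zero less_imp_le power2_le_imp_le)
  qed
  then show ?thesis by blast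
qed

end


context posA begin

lemma closed_kerA: "closed {v. A v = 0}"
  by (rule closed_Collect_eq) (use bounded_linear.continuous_on[OF Abl continuous_on_id] in \<open>auto intro: continuous_on_const\<close>)

lemma mp_inv_A: "A (mp_inv A (A w)) = A w"
proof -
  let ?N = "{v. A v = 0}"
  have "\<exists>m\<in>?N. \<forall>y\<in>?N. cinner (w - m) y = 0"
    by (rule projection[OF closed_kerA])
      (auto simp: bl_zero[OF Abl] bl_add[OF Abl] clinear_scaleC[OF Acl])
  then obtain n where nN: "A n = 0" and orthn: "\<And>y. A y = 0 \<Longrightarrow> cinner (w - n) y = 0" by auto
  define P where "P x \<longleftrightarrow> x \<in> orth ?N \<and> (\<exists>z\<in>orth (range A). A w = A x + z)" for x
  have Pimp: "A x = A w" if "P x" for x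
  proof -
    from that obtain z where z: "z \<in> orth (range A)" and e: "A w = A x + z" unfolding P_def by blast
    have "z = A (w - x)" using e by (simp add: bl_diff[OF Abl])
    then have "z \<in> range A" by simp
    with z have "cinner z z = 0" unfolding orth_def by blast
    then have "z = 0" using cinner_eq_zero_iff by blast
    then show ?thesis using e by simp
  qed
  have ex: "P (w - n)"
    unfolding P_def orth_def using orthn nN by (auto simp: bl_diff[OF Abl])
  have uniq: "x1 = x2" if "P x1" "P x2" for x1 x2
  proof -
    have "A (x1 - x2) = 0" using Pimp[OF that(1)] Pimp[OF that(2)] by (simp add: bl_diff[OF Abl])
    then have "x1 - x2 \<in> ?N" by simp
    moreover have "x1 \<in> orth ?N" "x2 \<in> orth ?N" using that unfolding P_def by blast+
    ultimately have "cinner x1 (x1 - x2) = 0" "cinner x2 (x1 - x2) = 0"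
      unfolding orth_def by blast+
    then have "cinner (x1 - x2) (x1 - x2) = 0" by (simp add: cinner_diff_left)
    then have "x1 - x2 = 0" using cinner_eq_zero_iff by blast
    then show ?thesis by simp
  qed
  have "\<exists>!x. P x" using ex uniq by blast
  from theI'[OF this] have "P (mp_inv A (A w))" unfolding mp_inv_def P_def by simp
  then show ?thesis by (rule Pimp)
qed

lemma sharp_A:
  assumes SB: "S \<in> BA A" and ad: "aadj A S T"
  shows "A (sharpA A S y) = A (T y)"
proof -
  have bS: "bounded_clinear S" using SB unfolding BA_def by blast
  have "adj S (A y) = A (T y)"
  proof (rule cinner_ext)
    fix x
    have "cinner (adj S (A y)) x = cnj (cinner x (adj S (A y)))" by (rule cinner_commute)
    also have "cinner x (adj S (A y)) = cinner (S x) (A y)" by (rule adj_exists[OF bS, symmetric])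
    also have "\<dots> = ainner A (S x) y" by (simp add: ainner_def posA_sym[OF pA])
    also have "\<dots> = ainner A x (T y)" using ad by (simp add: aadj_def)
    also have "\<dots> = cinner x (A (T y))" by (simp add: ainner_def posA_sym[OF pA])
    also have "cnj (cinner x (A (T y))) = cinner (A (T y)) x" by (rule cinner_commute[symmetric])
    finally show "cinner (adj S (A y)) x = cinner (A (T y)) x" .
  qed
  then show ?thesis by (simp add: sharpA_def mp_inv_A)
qed

lemma BA_obtain: "S \<in> BA A \<Longrightarrow> \<exists>T. bounded_clinear T \<and> aadj A S T"
  unfolding BA_def aadj_def by blast

lemma omega_cong: "(\<And>x. A (S x) = A (S' x)) \<Longrightarrow> omegaA A S = omegaA A S'"
  unfolding omegaA_def ainner_def by simp

lemma omega_bdd: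
  assumes "\<And>z. anorm A z = 1 \<Longrightarrow> cmod (ainner A (S z) z) \<le> K"
  shows "bdd_above (insert 0 {cmod (ainner A (S z) z) | z. anorm A z = 1})"
  using assms by (intro bdd_aboveI[of _ "max K 0"]) (auto simp: le_max_iff_disj)

lemma omega_nonneg:
  assumes "bdd_above (insert 0 {cmod (ainner A (S z) z) | z. anorm A z = 1})"
  shows "0 \<le> omegaA A S"
  unfolding omegaA_def by (rule cSup_upper[OF _ assms]) simp

lemma omega_upper:
  assumes bdd: "bdd_above (insert 0 {cmod (ainner A (S z) z) | z. anorm A z = 1})"
    and lin: "\<And>r x. S (scaleR r x) = scaleR r (S x)"
  shows "cmod (ainner A (S z) z) \<le> omegaA A S * (anorm A z)^2"
proof (cases "anorm A z = 0")
  case True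
  have "cmod (ainner A (S z) z) \<le> anorm A (S z) * anorm A z" by (rule ACS)
  then show ?thesis using True by simp
next
  case False
  then have ap: "anorm A z > 0" using anorm_nonneg[of z] by simp
  define z' where "z' = scaleR (1 / anorm A z) z"
  have "anorm A z' = 1" using ap by (simp add: z'_def anorm_scaleR)
  then have "cmod (ainner A (S z') z') \<le> omegaA A S"
    unfolding omegaA_def by (intro cSup_upper[OF _ bdd]) blast
  moreover have "cmod (ainner A (S z') z') = cmod (ainner A (S z) z) / (anorm A z)^2"
    using ap by (simp add: z'_def lin ainner_scaleR_left ainner_scaleR_right norm_mult norm_divide power2_eq_square)
  ultimately show ?thesis using ap by (simp add: field_simps)
qed

lemma omega_bdd_K:
  assumes "\<And>z. anorm A (S z) \<le> K * anorm A z"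
  shows "bdd_above (insert 0 {cmod (ainner A (S z) z) | z. anorm A z = 1})"
proof (rule omega_bdd)
  fix z assume "anorm A z = 1"
  then show "cmod (ainner A (S z) z) \<le> K" using ACS[of "S z" z] assms[of z] by simp
qed

definition psc :: "complex \<Rightarrow> 'a \<times> 'a \<Rightarrow> 'a \<times> 'a" where
  "psc c z = (scaleC c (fst z), scaleC c (snd z))"

lemma sesq0: "sesq (ainner0 A) psc"
proof unfold_locales
  fix x y z :: "'a \<times> 'a" and c
  show "ainner0 A (x + y) z = ainner0 A x z + ainner0 A y z"
    by (simp add: ainner0_def sesq.add_left[OF sesqA])
  show "ainner0 A (psc c x) y = c * ainner0 A x y"
    by (simp add: ainner0_def psc_def sesq.sc_left[OF sesqA] distrib_left)
  show "ainner0 A y x = cnj (ainner0 A x y)"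
    by (simp add: ainner0_def ainner_sym[of "fst x"] ainner_sym[of "snd x"])
  show "0 \<le> Re (ainner0 A x x)"
    using sesq.pos[OF sesqA, of "fst x"] sesq.pos[OF sesqA, of "snd x"] by (simp add: ainner0_def)
qed

lemma anorm0_N: "anorm0 A = sesq.N (ainner0 A)"
  by (rule ext) (simp add: sesq.N_def[OF sesq0] anorm0_def)

lemma anorm0_sq: "(anorm0 A z)^2 = (anorm A (fst z))^2 + (anorm A (snd z))^2"
  by (simp add: anorm0_N sesq.N_sq[OF sesq0] ainner0_def anorm_sq)

end


lemma real_aux1:
  fixes P M Q Q1 Q2 x y :: real
  assumes "2 * P \<le> M + Q" "Q \<le> Q1 + Q2" "M \<le> (x + y) / 2" shows "P \<le> (x + y) / 4 + (Q1 + Q2) / 2"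
  using assms by argo

lemma real_aux2:
  fixes P F x y v s1 s2 w1 w2 Q1 Q2 u1 u2 M1 M2 :: real
  assumes "P \<le> (x + y)/4 + (Q1+Q2)/2" "x + y + 4*v = s1 + s2" "F \<le> v" "s1 \<le> w1" "s2 \<le> w2"
    "Q1 \<le> u1" "Q2 \<le> u2" "w1 + w2 \<le> M1" "u1 + u2 \<le> M2"
  shows "P + F \<le> 1/4 * M1 + 1/2 * M2"
  using assms by argo

theorem theorem3p6:
  fixes A B C :: "'a::chilbert_space \<Rightarrow> 'a"
  assumes "positive_op A" and "B \<in> BA A" and "C \<in> BA A"
  shows "(dwA0 A (offdiag B C))\<^sup>2 \<le>
      1/4 * max (omegaA A (\<lambda>x. B (sharpA A B x) + sharpA A C (C x)
                               + scaleR 4 (sharpA A C (C (sharpA A C (C x))))))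
                (omegaA A (\<lambda>x. sharpA A B (B x) + C (sharpA A C x)
                               + scaleR 4 (sharpA A B (B (sharpA A B (B x))))))
    + 1/2 * max (omegaA A (B \<circ> C)) (omegaA A (C \<circ> B))"
proof -
  interpret posA A by unfold_locales (rule assms(1))
  obtain TB where TBb: "bounded_clinear TB" and adB: "aadj A B TB" using BA_obtain[OF assms(2)] by blast
  obtain TC where TCb: "bounded_clinear TC" and adC: "aadj A C TC" using BA_obtain[OF assms(3)] by blast
  have Bb: "bounded_clinear B" using assms(2) unfolding BA_def by blast
  have Cb: "bounded_clinear C" using assms(3) unfolding BA_def by blast
  note blB = bcl_bl[OF Bb] and blC = bcl_bl[OF Cb] and blTB = bcl_bl[OF TBb] and blTC = bcl_bl[OF TCb]
  have adB': "aadj A TB B" by (rule aadj_swap[OF adB])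
  have adC': "aadj A TC C" by (rule aadj_swap[OF adC])
  have aB: "ainner A (B x) y = ainner A x (TB y)" for x y using adB unfolding aadj_def by blast
  have aC: "ainner A (C x) y = ainner A x (TC y)" for x y using adC unfolding aadj_def by blast
  have aTB: "ainner A (TB x) y = ainner A x (B y)" for x y using adB' unfolding aadj_def by blast
  have aTC: "ainner A (TC x) y = ainner A x (C y)" for x y using adC' unfolding aadj_def by blast
  obtain KB where KB: "\<And>z. anorm A (B z) \<le> KB * anorm A z" using abound[OF blB blTB adB] by blast
  obtain KC where KC: "\<And>z. anorm A (C z) \<le> KC * anorm A z" using abound[OF blC blTC adC] by blast
  obtain KTB where KTB: "\<And>z. anorm A (TB z) \<le> KTB * anorm A z" using abound[OF blTB blB adB'] by blast
  obtain KTC where KTC: "\<And>z. anorm A (TC z) \<le> KTC * anorm A z" using abound[OF blTC blC adC'] by blast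
  have shB: "A (sharpA A B y) = A (TB y)" for y by (rule sharp_A[OF assms(2) adB])
  have shC: "A (sharpA A C y) = A (TC y)" for y by (rule sharp_A[OF assms(3) adC])
  note Aadd = bl_add[OF Abl] and AscR = bl_scaleR[OF Abl]
  define T1 where "T1 x = B (TB x) + TC (C x) + scaleR 4 (TC (C (TC (C x))))" for x
  define T2 where "T2 x = TB (B x) + C (TC x) + scaleR 4 (TB (B (TB (B x))))" for x
  have om1: "omegaA A (\<lambda>x. B (sharpA A B x) + sharpA A C (C x)
                               + scaleR 4 (sharpA A C (C (sharpA A C (C x))))) = omegaA A T1"
  proof (rule omega_cong)
    fix x
    have e1: "A (B (sharpA A B x)) = A (B (TB x))" by (rule aadj_resp[OF adB shB])
    have e2: "A (C (sharpA A C (C x))) = A (C (TC (C x)))" by (rule aadj_resp[OF adC shC])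
    have e3: "A (sharpA A C (C (sharpA A C (C x)))) = A (TC (C (TC (C x))))"
      using shC[of "C (sharpA A C (C x))"] aadj_resp[OF adC' e2] by (rule trans)
    show "A (B (sharpA A B x) + sharpA A C (C x) + scaleR 4 (sharpA A C (C (sharpA A C (C x))))) = A (T1 x)"
      unfolding T1_def by (simp add: Aadd AscR e1 e3 shC aadj_resp[OF adC' e2])
  qed
  have om2: "omegaA A (\<lambda>x. sharpA A B (B x) + C (sharpA A C x)
                               + scaleR 4 (sharpA A B (B (sharpA A B (B x))))) = omegaA A T2"
  proof (rule omega_cong)
    fix x
    have e1: "A (C (sharpA A C x)) = A (C (TC x))" by (rule aadj_resp[OF adC shC])
    have e2: "A (B (sharpA A B (B x))) = A (B (TB (B x)))" by (rule aadj_resp[OF adB shB])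
    have e3: "A (sharpA A B (B (sharpA A B (B x)))) = A (TB (B (TB (B x))))"
      using shB[of "B (sharpA A B (B x))"] aadj_resp[OF adB' e2] by (rule trans)
    show "A (sharpA A B (B x) + C (sharpA A C x) + scaleR 4 (sharpA A B (B (sharpA A B (B x))))) = A (T2 x)"
      unfolding T2_def by (simp add: Aadd AscR e1 e3 shB aadj_resp[OF adB' e2])
  qed
  have ainner_add: "ainner A (x + y) z = ainner A x z + ainner A y z" for x y z
    by (rule sesq.add_left[OF sesqA])
  have F1: "ainner A (T1 u) u = complex_of_real ((anorm A (TB u))^2 + (anorm A (C u))^2 + 4 * (anorm A (TC (C u)))^2)" for u
  proof -
    have "ainner A (T1 u) u = ainner A (TB u) (TB u) + ainner A (C u) (C u) + of_real 4 * ainner A (TC (C u)) (TC (C u))"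
    proof -
      have h1: "ainner A (B (TB u)) u = ainner A (TB u) (TB u)" by (rule aB)
      have h2: "ainner A (TC (C u)) u = ainner A (C u) (C u)" by (rule aTC)
      have h3: "ainner A (TC (C (TC (C u)))) u = ainner A (TC (C u)) (TC (C u))"
        using aTC[of "C (TC (C u))" u] aC[of "TC (C u)" "C u"] by (rule trans)
      show ?thesis unfolding T1_def by (simp only: ainner_add ainner_scaleR_left h1 h2 h3)
    qed
    then show ?thesis by (simp add: ainner_self)
  qed
  have F2: "ainner A (T2 u) u = complex_of_real ((anorm A (B u))^2 + (anorm A (TC u))^2 + 4 * (anorm A (TB (B u)))^2)" for u
  proof -
    have "ainner A (T2 u) u = ainner A (B u) (B u) + ainner A (TC u) (TC u) + of_real 4 * ainner A (TB (B u)) (TB (B u))"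
    proof -
      have h1: "ainner A (TB (B u)) u = ainner A (B u) (B u)" by (rule aTB)
      have h2: "ainner A (C (TC u)) u = ainner A (TC u) (TC u)" by (rule aC)
      have h3: "ainner A (TB (B (TB (B u)))) u = ainner A (TB (B u)) (TB (B u))"
        using aTB[of "B (TB (B u))" u] aB[of "TB (B u)" "B u"] by (rule trans)
      show ?thesis unfolding T2_def by (simp only: ainner_add ainner_scaleR_left h1 h2 h3)
    qed
    then show ?thesis by (simp add: ainner_self)
  qed
  have G1: "cmod (ainner A (T1 u) u) = (anorm A (TB u))^2 + (anorm A (C u))^2 + 4 * (anorm A (TC (C u)))^2" for u
    unfolding F1 norm_of_real by (rule abs_of_nonneg) simp
  have G2: "cmod (ainner A (T2 u) u) = (anorm A (B u))^2 + (anorm A (TC u))^2 + 4 * (anorm A (TB (B u)))^2" for u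
    unfolding F2 norm_of_real by (rule abs_of_nonneg) simp
  have sqb: "(anorm A (S z))^2 \<le> K^2" if "anorm A z = 1" "\<And>z. anorm A (S z) \<le> K * anorm A z" for S K z
    using that(2)[of z] that(1) anorm_nonneg[of "S z"] by (simp add: power_mono)
  have bdd1: "bdd_above (insert 0 {cmod (ainner A (T1 z) z) | z. anorm A z = 1})"
  proof (rule omega_bdd)
    fix z :: 'a assume z1: "anorm A z = 1"
    have "anorm A (C z) \<le> KC" using KC[of z] z1 by simp
    have "anorm A (TC (C z)) \<le> \<bar>KTC\<bar> * anorm A (C z)"
      using KTC[of "C z"] mult_right_mono[OF abs_ge_self anorm_nonneg, of KTC "C z"] by linarith
    also have "\<dots> \<le> \<bar>KTC\<bar> * KC" by (rule mult_left_mono) (simp_all add: \<open>anorm A (C z) \<le> KC\<close>)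
    finally have "(anorm A (TC (C z)))^2 \<le> (\<bar>KTC\<bar> * KC)^2" using anorm_nonneg by (simp add: power_mono)
    then show "cmod (ainner A (T1 z) z) \<le> KTB^2 + KC^2 + 4 * (\<bar>KTC\<bar> * KC)^2"
      using sqb[OF z1, of TB KTB, OF KTB] sqb[OF z1, of C KC, OF KC]
      unfolding G1 by linarith
  qed
  have bdd2: "bdd_above (insert 0 {cmod (ainner A (T2 z) z) | z. anorm A z = 1})"
  proof (rule omega_bdd)
    fix z :: 'a assume z1: "anorm A z = 1"
    have "anorm A (B z) \<le> KB" using KB[of z] z1 by simp
    have "anorm A (TB (B z)) \<le> \<bar>KTB\<bar> * anorm A (B z)"
      using KTB[of "B z"] mult_right_mono[OF abs_ge_self anorm_nonneg, of KTB "B z"] by linarith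
    also have "\<dots> \<le> \<bar>KTB\<bar> * KB" by (rule mult_left_mono) (simp_all add: \<open>anorm A (B z) \<le> KB\<close>)
    finally have "(anorm A (TB (B z)))^2 \<le> (\<bar>KTB\<bar> * KB)^2" using anorm_nonneg by (simp add: power_mono)
    then show "cmod (ainner A (T2 z) z) \<le> KB^2 + KTC^2 + 4 * (\<bar>KTB\<bar> * KB)^2"
      using sqb[OF z1, of B KB, OF KB] sqb[OF z1, of TC KTC, OF KTC]
      unfolding G2 by linarith
  qed
  have KBC: "anorm A ((B \<circ> C) z) \<le> (\<bar>KB\<bar> * \<bar>KC\<bar>) * anorm A z" for z
  proof -
    have "anorm A (B (C z)) \<le> \<bar>KB\<bar> * anorm A (C z)"
      using KB[of "C z"] mult_right_mono[OF abs_ge_self anorm_nonneg, of KB "C z"] by linarith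
    also have "\<dots> \<le> \<bar>KB\<bar> * (\<bar>KC\<bar> * anorm A z)"
      using KC[of z] mult_right_mono[OF abs_ge_self anorm_nonneg, of KC z]
      by (intro mult_left_mono) simp_all
    finally show ?thesis by (simp add: mult_ac)
  qed
  have KCB: "anorm A ((C \<circ> B) z) \<le> (\<bar>KC\<bar> * \<bar>KB\<bar>) * anorm A z" for z
  proof -
    have "anorm A (C (B z)) \<le> \<bar>KC\<bar> * anorm A (B z)"
      using KC[of "B z"] mult_right_mono[OF abs_ge_self anorm_nonneg, of KC "B z"] by linarith
    also have "\<dots> \<le> \<bar>KC\<bar> * (\<bar>KB\<bar> * anorm A z)"
      using KB[of z] mult_right_mono[OF abs_ge_self anorm_nonneg, of KB z]
      by (intro mult_left_mono) simp_all
    finally show ?thesis by (simp add: mult_ac)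
  qed
  have bddBC: "bdd_above (insert 0 {cmod (ainner A ((B \<circ> C) z) z) | z. anorm A z = 1})"
    by (rule omega_bdd_K[OF KBC])
  have bddCB: "bdd_above (insert 0 {cmod (ainner A ((C \<circ> B) z) z) | z. anorm A z = 1})"
    by (rule omega_bdd_K[OF KCB])
  have lin1: "T1 (scaleR r x) = scaleR r (T1 x)" for r x
    unfolding T1_def by (simp add: bl_scaleR[OF blB] bl_scaleR[OF blC] bl_scaleR[OF blTB] bl_scaleR[OF blTC] scaleR_add_right)
  have lin2: "T2 (scaleR r x) = scaleR r (T2 x)" for r x
    unfolding T2_def by (simp add: bl_scaleR[OF blB] bl_scaleR[OF blC] bl_scaleR[OF blTB] bl_scaleR[OF blTC] scaleR_add_right)
  have linBC: "(B \<circ> C) (scaleR r x) = scaleR r ((B \<circ> C) x)" for r x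
    by (simp add: bl_scaleR[OF blB] bl_scaleR[OF blC])
  have linCB: "(C \<circ> B) (scaleR r x) = scaleR r ((C \<circ> B) x)" for r x
    by (simp add: bl_scaleR[OF blB] bl_scaleR[OF blC])
  define W1 where "W1 = omegaA A T1"
  define W2 where "W2 = omegaA A T2"
  define WBC where "WBC = omegaA A (B \<circ> C)"
  define WCB where "WCB = omegaA A (C \<circ> B)"
  define RHS where "RHS = 1/4 * max W1 W2 + 1/2 * max WBC WCB"
  have W1n: "0 \<le> W1" unfolding W1_def by (rule omega_nonneg[OF bdd1])
  have W2n: "0 \<le> W2" unfolding W2_def by (rule omega_nonneg[OF bdd2])
  have WBCn: "0 \<le> WBC" unfolding WBC_def by (rule omega_nonneg[OF bddBC])
  have WCBn: "0 \<le> WCB" unfolding WCB_def by (rule omega_nonneg[OF bddCB])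
  have RHSn: "0 \<le> RHS" unfolding RHS_def using W1n WBCn by (simp add: le_max_iff_disj)
  have elem: "sqrt ((cmod (ainner0 A (offdiag B C z) z))\<^sup>2 + (anorm0 A (offdiag B C z)) ^ 4) \<le> sqrt RHS"
    if z1: "anorm0 A z = 1" for z
  proof -
    obtain z1' z2 where zz: "z = (z1', z2)" by (cases z)
    let ?g = "ainner0 A"
    let ?N = "anorm0 A"
    define X where "X = offdiag B C z"
    define Y where "Y = (TC z2, TB z1')"
    define V where "V = (TC (C z1'), TB (B z2))"
    define a where "a = (anorm A z1')^2"
    define b where "b = (anorm A z2)^2"
    have X: "X = (B z2, C z1')" by (simp add: X_def offdiag_def zz)
    have ab: "a + b = 1" using anorm0_sq[of z] z1 by (simp add: a_def b_def zz)
    have a0: "0 \<le> a" "0 \<le> b" by (simp_all add: a_def b_def)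
    have gzz: "?g z z = 1"
    proof -
      have "?g z z = complex_of_real ((?N z)^2)"
        using sesq.self_real[OF sesq0, of z] by (simp add: anorm0_N sesq.N_sq[OF sesq0])
      then show ?thesis using z1 by simp
    qed
    define p where "p = ?g X z"
    have gzY: "?g z Y = p"
    proof -
      have "?g z Y = ainner A z1' (TC z2) + ainner A z2 (TB z1')" by (simp add: zz Y_def ainner0_def)
      moreover have "p = ainner A (B z2) z1' + ainner A (C z1') z2" by (simp add: p_def X zz ainner0_def)
      ultimately show ?thesis using aB[of z2 z1'] aC[of z1' z2] by (simp add: add.commute)
    qed
    define q1 where "q1 = ainner A ((B \<circ> C) z1') z1'"
    define q2 where "q2 = ainner A ((C \<circ> B) z2) z2"
    have gXY: "?g X Y = q1 + q2"
    proof -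
      have "?g X Y = ainner A (B z2) (TC z2) + ainner A (C z1') (TB z1')" by (simp add: X Y_def ainner0_def)
      moreover have "q1 = ainner A (C z1') (TB z1')" unfolding q1_def using aB[of "C z1'" z1'] by simp
      moreover have "q2 = ainner A (B z2) (TC z2)" unfolding q2_def using aC[of "B z2" z2] by simp
      ultimately show ?thesis by (simp add: add.commute)
    qed
    have buz: "2 * cmod (p * p) \<le> ?N X * ?N Y + cmod (q1 + q2)"
      using sesq.buzano[OF sesq0 gzz, of X Y] gzY gXY
      by (simp add: p_def anorm0_N)
    have NX: "(?N X)^2 = (anorm A (B z2))^2 + (anorm A (C z1'))^2" by (simp add: anorm0_sq X)
    have NY: "(?N Y)^2 = (anorm A (TC z2))^2 + (anorm A (TB z1'))^2" by (simp add: anorm0_sq Y_def)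
    have NV: "(?N V)^2 = (anorm A (TC (C z1')))^2 + (anorm A (TB (B z2)))^2" by (simp add: anorm0_sq V_def)
    have amgm: "?N X * ?N Y \<le> ((?N X)^2 + (?N Y)^2) / 2"
    proof -
      have "2 * (?N X * ?N Y) \<le> (?N X)^2 + (?N Y)^2"
        using power2_diff[of "?N X" "?N Y"] zero_le_power2[of "?N X - ?N Y"]
        unfolding mult.assoc by linarith
      then show ?thesis by simp
    qed
    have gXX: "?g X X = ?g V z"
    proof -
      have "?g X X = ainner A (B z2) (B z2) + ainner A (C z1') (C z1')" by (simp add: X ainner0_def)
      moreover have "?g V z = ainner A (TC (C z1')) z1' + ainner A (TB (B z2)) z2" by (simp add: V_def zz ainner0_def)
      ultimately show ?thesis using aTC[of "C z1'" z1'] aTB[of "B z2" z2] by (simp add: add.commute)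
    qed
    have NXV: "(?N X)^2 \<le> ?N V"
    proof -
      have "(?N X)^2 = Re (?g X X)" by (simp add: anorm0_N sesq.N_sq[OF sesq0])
      also have "\<dots> \<le> cmod (?g V z)" using gXX complex_Re_le_cmod by simp
      also have "\<dots> \<le> ?N V * ?N z" using sesq.CS[OF sesq0, of V z] by (simp add: anorm0_N)
      finally show ?thesis using z1 by simp
    qed
    have NX4: "(?N X)^4 \<le> (?N V)^2"
    proof -
      have "(?N X)^4 = ((?N X)^2)^2" by simp
      also have "\<dots> \<le> (?N V)^2" by (rule power_mono[OF NXV]) simp
      finally show ?thesis .
    qed
    have c1: "cmod (ainner A (T1 z1') z1') \<le> W1 * a"
      unfolding W1_def a_def by (rule omega_upper[OF bdd1 lin1])
    have c2: "cmod (ainner A (T2 z2) z2) \<le> W2 * b"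
      unfolding W2_def b_def by (rule omega_upper[OF bdd2 lin2])
    have c3: "cmod q1 \<le> WBC * a"
      unfolding WBC_def a_def q1_def by (rule omega_upper[OF bddBC linBC])
    have c4: "cmod q2 \<le> WCB * b"
      unfolding WCB_def b_def q2_def by (rule omega_upper[OF bddCB linCB])
    have s1: "cmod (ainner A (T1 z1') z1') = (anorm A (TB z1'))^2 + (anorm A (C z1'))^2 + 4 * (anorm A (TC (C z1')))^2"
      by (rule G1)
    have s2: "cmod (ainner A (T2 z2) z2) = (anorm A (B z2))^2 + (anorm A (TC z2))^2 + 4 * (anorm A (TB (B z2)))^2"
      by (rule G2)
    have pp: "cmod (p * p) = (cmod p)^2" by (simp add: norm_mult power2_eq_square)
    have q12: "cmod (q1 + q2) \<le> cmod q1 + cmod q2" by (rule norm_triangle_ineq)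
    have m1: "W1 * a + W2 * b \<le> max W1 W2"
    proof -
      have "W1 * a + W2 * b \<le> max W1 W2 * a + max W1 W2 * b"
        using a0 by (intro add_mono mult_right_mono) simp_all
      then show ?thesis using ab by (simp add: distrib_left[symmetric])
    qed
    have m2: "WBC * a + WCB * b \<le> max WBC WCB"
    proof -
      have "WBC * a + WCB * b \<le> max WBC WCB * a + max WBC WCB * b"
        using a0 by (intro add_mono mult_right_mono) simp_all
      then show ?thesis using ab by (simp add: distrib_left[symmetric])
    qed
    have "(cmod p)^2 + (?N X)^4 \<le> RHS"
    proof -
      have h1: "(cmod p)^2 \<le> ((?N X)^2 + (?N Y)^2) / 4 + (cmod q1 + cmod q2) / 2"
      proof -
        have "2 * (cmod p)^2 \<le> ?N X * ?N Y + cmod (q1 + q2)" using buz unfolding pp .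
        from real_aux1[OF this q12 amgm] show ?thesis .
      qed
      have h2: "(?N X)^2 + (?N Y)^2 + 4 * (?N V)^2 = cmod (ainner A (T1 z1') z1') + cmod (ainner A (T2 z2) z2)"
        unfolding NX NY NV s1 s2 by simp
      from real_aux2[OF h1 h2 NX4 c1 c2 c3 c4 m1 m2] show ?thesis by (simp only: RHS_def)
    qed
    then show ?thesis unfolding p_def X_def by (rule real_sqrt_le_mono)
  qed
  define E where "E = insert 0 {sqrt ((cmod (ainner0 A (offdiag B C z) z))\<^sup>2 + (anorm0 A (offdiag B C z)) ^ 4) | z. anorm0 A z = 1}"
  have Eb: "\<And>e. e \<in> E \<Longrightarrow> e \<le> sqrt RHS" unfolding E_def using elem RHSn by auto
  have d1: "Sup E \<le> sqrt RHS" by (rule cSup_least) (auto simp: E_def Eb)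
  have d0: "0 \<le> Sup E" by (rule cSup_upper) (auto simp: E_def intro!: bdd_aboveI[of _ "sqrt RHS"] Eb[unfolded E_def])
  have "(Sup E)^2 \<le> (sqrt RHS)^2" by (rule power_mono[OF d1 d0])
  then have "(dwA0 A (offdiag B C))^2 \<le> RHS" unfolding dwA0_def E_def using RHSn by simp
  then show ?thesis unfolding RHS_def W1_def W2_def WBC_def WCB_def om1 om2 .
qed


end
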